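(* Let $\lambda>0$ and $\alpha_0,\tilde{\alpha}_0,\alpha,\tilde{\alpha}\in(0,1]$ with $\frac{\tilde{\alpha}}{\alpha}-\frac{\tilde{\alpha}_0}{\alpha_0}>0$. For $j\geq0$ set $\alpha_j=\alpha$, $\tilde\alpha_j=\tilde\alpha$ for $j\geq1$, $d_{k,j}:=\frac{\lambda^k}{\Gamma(\alpha_jk+1)}$, $D_j(x):=E_{\alpha_j,1}(\lambda x)$ and $\delta_j(t):=t^{\tilde{\alpha}_j}$; also set $v(\delta(t)):=t^{\tilde{\alpha}/\alpha}$ and $\Delta(u):=(\lambda u)^{1/\alpha}$. Then for all $u>0$, $$\lim_{t\to\infty}\frac{1}{t^{\tilde{\alpha}/\alpha}}\log\sum_{k\geq0}\frac{d_{k,k}(u\delta_k(t))^k}{D_k(\delta_k(t))}=\max\{\Delta(u)-\Delta(1),0\}=\max\{\lambda^{1/\alpha}(u^{1/\alpha}-1),0\}.$$ Explicitly, the sum equals $\frac{1}{E_{\alpha_0,1}(\lambda t^{\tilde{\alpha}_0})}+\sum_{k\geq1}\frac{\lambda^k(ut^{\tilde{\alpha}})^k}{\Gamma(\alpha k+1)E_{\alpha,1}(\lambda t^{\tilde{\alpha}})}$.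
   Context: For $a\in(0,1]$, $E_{a,1}(x):=\sum_{k\geq0}\frac{x^k}{\Gamma(ak+1)}$ denotes the Mittag-Leffler function (with two parameters $a$ and $1$). *)

theory Defs
  imports "HOL-Analysis.Analysis"
begin

definition mittag_leffler1 :: "real \<Rightarrow> real \<Rightarrow> real" where
  "mittag_leffler1 a x = (\<Sum>k. x ^ k / Gamma (a * real k + 1))"

end

theory Submission
  imports Defs "HOL-Real_Asymp.Real_Asymp"
begin

lemma ln_fact_upper:
  assumes "m \<ge> 1"
  shows "ln (fact m :: real) \<le> (real m + 1) * ln (real m) + 1 - real m"
  using assms
proof (induction m rule: dec_induct)
  case base then show ?case by simp
next
  case (step m)
  have m0: "real m \<ge> 1" using step by simp
  have l: "ln (real m / (real m + 1)) \<le> real m / (real m + 1) - 1"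
    by (rule ln_le_minus_one) (use m0 in simp)
  have "real m / (real m + 1) - 1 = - 1 / (real m + 1)" using m0 by (simp add: field_simps)
  moreover have "ln (real m / (real m + 1)) = ln (real m) - ln (real m + 1)"
    using m0 by (simp add: ln_div)
  ultimately have k0: "1 / (real m + 1) \<le> ln (real m + 1) - ln (real m)"
    using l by simp
  have k: "1 \<le> (real m + 1) * (ln (real m + 1) - ln (real m))"
    using k0 m0 by (simp add: divide_le_eq mult.commute)
  have "ln (fact (Suc m) :: real) = ln (real m + 1) + ln (fact m)"
    by (simp add: ln_mult add.commute)
  also have "\<dots> \<le> ln (real m + 1) + ((real m + 1) * ln (real m) + 1 - real m)"
    using step by simp
  also have "\<dots> \<le> (real (Suc m) + 1) * ln (real (Suc m)) + 1 - real (Suc m)"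
    using k by (simp add: algebra_simps)
  finally show ?case .
qed

lemma pow_div_fact_le_exp:
  fixes w :: real assumes "w \<ge> 0" shows "w ^ n / fact n \<le> exp w"
proof -
  have q: "(\<lambda>n. w ^ n /\<^sub>R fact n) = (\<lambda>k. w ^ k / fact k)"
    by (rule ext) (simp add: real_scaleR_def divide_inverse mult.commute)
  have e: "(\<lambda>k. w ^ k / fact k) sums exp w" using exp_converges[of w] unfolding q .
  have "sum (\<lambda>k. w ^ k / fact k) {n} \<le> (\<Sum>k. w ^ k / fact k)"
    by (rule sum_le_suminf) (use assms e in \<open>auto simp: sums_iff\<close>)
  thus ?thesis using e by (simp add: sums_iff)
qed

lemma Gamma_ge_half:
  assumes "x \<ge> (0::real)" "x < 1"
  shows "Gamma (x + 1) \<ge> 1/2"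
proof -
  have nn: "x + 1 \<notin> \<int>\<^sub>\<le>\<^sub>0" using assms by (auto elim!: nonpos_Ints_cases)
  have "Gamma (x + 1 + 1) = (x + 1) * Gamma (x + 1)" by (rule Gamma_plus1[OF nn])
  moreover have "Gamma 2 \<le> Gamma (x + 1 + 1)"
  proof (cases "x = 0")
    case True then show ?thesis by simp
  next
    case False then show ?thesis using assms
      by (intro less_imp_le Gamma_real_strict_mono) auto
  qed
  moreover have "Gamma (2::real) = 1" using Gamma_fact[of 1] by simp
  moreover have "Gamma (x+1) > 0" using assms by simp
  ultimately have "1 \<le> (x + 1) * Gamma (x + 1)" by simp
  also have "\<dots> \<le> 2 * Gamma (x + 1)" using assms \<open>Gamma (x+1) > 0\<close> by (intro mult_right_mono) auto
  finally show ?thesis by simp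
qed

lemma term_bound:
  assumes "w \<ge> (1::real)" "x \<ge> 0"
  shows "w powr x / Gamma (x + 1) \<le> 2 * w * exp w"
proof (cases "x < 1")
  case True
  have g: "Gamma (x + 1) \<ge> 1/2" using Gamma_ge_half assms True by simp
  have "w powr x \<le> w powr 1" using assms True by (intro powr_mono) auto
  hence "w powr x \<le> w" using assms by simp
  hence "w powr x / Gamma (x + 1) \<le> w / (1/2)" using g assms
    by (intro frac_le) auto
  also have "\<dots> \<le> 2 * w * exp w" using assms by simp
  finally show ?thesis .
next
  case False
  define n where "n = nat \<lfloor>x\<rfloor>"
  have n1: "n \<ge> 1" using False by (simp add: n_def le_nat_floor)
  have nx: "real n \<le> x" "x < real n + 1" using assms by (auto simp: n_def)
  have gf: "Gamma (1 + real n) = (fact n :: real)" by (rule Gamma_fact)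
  have "fact n = Gamma (real n + 1)" using gf by (simp add: add.commute)
  also have "\<dots> \<le> Gamma (x + 1)"
  proof (cases "real n = x")
    case True then show ?thesis by simp
  next
    case False then show ?thesis using nx n1 by (intro less_imp_le Gamma_real_strict_mono) auto
  qed
  finally have g: "fact n \<le> Gamma (x + 1)" .
  have "w powr x \<le> w powr (real n + 1)" using assms nx by (intro powr_mono) auto
  also have "\<dots> = w * w ^ n" using assms by (simp add: powr_add powr_realpow)
  finally have p: "w powr x \<le> w * w ^ n" .
  have "w powr x / Gamma (x + 1) \<le> (w * w ^ n) / fact n" using p g assms
    by (intro frac_le) (auto intro: fact_gt_zero)
  also have "\<dots> = w * (w ^ n / fact n)" by simp
  also have "\<dots> \<le> w * exp w" using assms pow_div_fact_le_exp[of w n] by (intro mult_left_mono) auto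
  also have "\<dots> \<le> 2 * w * exp w" using assms by simp
  finally show ?thesis .
qed

lemma Gamma_ak_pos: "a \<ge> 0 \<Longrightarrow> Gamma (a * real k + 1) > (0::real)"
  by (intro Gamma_real_pos) (simp add: add_nonneg_pos)

lemma MLf_term_upper:
  fixes a z c :: real
  assumes "a > 0" "z \<ge> 1" "c \<ge> 1"
  shows "(z powr a) ^ k / Gamma (a * real k + 1) \<le> 2 * (c * z) * exp (c * z) * (c powr (-a)) ^ k"
proof -
  define x where "x = a * real k"
  have x0: "x \<ge> 0" using assms by (simp add: x_def)
  have c0: "c > 0" "z > 0" using assms by auto
  have e1: "(z powr a) ^ k = z powr x" using c0 by (simp add: x_def powr_powr powr_realpow[symmetric] mult.commute)
  have e2: "(c powr (-a)) ^ k = c powr (-x)" using c0 by (simp add: x_def powr_powr powr_realpow[symmetric] mult.commute)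
  have e3: "z powr x = (c * z) powr x * c powr (-x)"
    using c0 by (simp add: powr_mult powr_minus field_simps)
  have g: "Gamma (x + 1) > 0" using x0 by simp
  have "1 * 1 \<le> c * z" using assms by (intro mult_mono) auto
  hence cz: "1 \<le> c * z" by simp
  have "(z powr a) ^ k / Gamma (a * real k + 1) = z powr x / Gamma (x + 1)"
    by (simp add: e1 x_def)
  also have "\<dots> = ((c * z) powr x / Gamma (x + 1)) * c powr (-x)"
    by (subst e3) simp
  also have "\<dots> \<le> (2 * (c * z) * exp (c * z)) * c powr (-x)"
    using assms cz by (intro mult_right_mono term_bound x0) auto
  finally show ?thesis by (simp add: e2)
qed

lemma MLf_summable:
  fixes a y :: real
  assumes "a > 0" "y \<ge> 0"
  shows "summable (\<lambda>k. y ^ k / Gamma (a * real k + 1))"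
proof -
  define z where "z = max 1 (y powr (1/a))"
  have z1: "z \<ge> 1" by (simp add: z_def)
  have "y = (y powr (1/a)) powr a" using assms by (simp add: powr_powr)
  also have "\<dots> \<le> z powr a" using assms by (intro powr_mono2) (auto simp: z_def)
  finally have yz: "y \<le> z powr a" .
  have q: "norm ((2::real) powr (-a)) < 1" using assms by (simp add: powr_minus inverse_less_1_iff)
  have sg: "summable (\<lambda>k. 2 * (2 * z) * exp (2 * z) * ((2::real) powr (-a)) ^ k)"
    by (intro summable_mult summable_geometric q)
  show ?thesis
  proof (rule summable_comparison_test[OF _ sg], intro exI allI impI)
    fix k :: nat
    have "norm (y ^ k / Gamma (a * real k + 1)) = y ^ k / Gamma (a * real k + 1)"
      using assms Gamma_ak_pos[of a k] by simp
    also have "\<dots> \<le> (z powr a) ^ k / Gamma (a * real k + 1)"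
      using assms Gamma_ak_pos[of a k] yz by (intro divide_right_mono power_mono) auto
    also have "\<dots> \<le> 2 * (2 * z) * exp (2 * z) * ((2::real) powr (-a)) ^ k"
      using assms z1 by (intro MLf_term_upper) auto
    finally show "norm (y ^ k / Gamma (a * real k + 1)) \<le> 2 * (2 * z) * exp (2 * z) * ((2::real) powr (-a)) ^ k" .
  qed
qed

lemma MLf_ge_term:
  assumes "a > 0" "y \<ge> 0"
  shows "mittag_leffler1 a y \<ge> y ^ k / Gamma (a * real k + 1)"
proof -
  have "sum (\<lambda>k. y ^ k / Gamma (a * real k + 1)) {k} \<le> (\<Sum>k. y ^ k / Gamma (a * real k + 1))"
    by (rule sum_le_suminf[OF MLf_summable[OF assms]]) (use assms Gamma_ak_pos[of a] in \<open>auto intro!: divide_nonneg_pos\<close>)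
  thus ?thesis by (simp add: mittag_leffler1_def)
qed

lemma MLf_ge_1:
  assumes "a > 0" "y \<ge> 0"
  shows "mittag_leffler1 a y \<ge> 1"
  using MLf_ge_term[OF assms, of 0] by simp

lemma MLf_upper:
  fixes a z c :: real
  assumes "a > 0" "z \<ge> 1" "c > 1"
  shows "mittag_leffler1 a (z powr a) \<le> 2 * (c * z) * exp (c * z) / (1 - c powr (-a))"
proof -
  have q: "norm (c powr (-a)) < 1" using assms by (simp add: powr_minus inverse_less_1_iff)
  have sg: "(\<lambda>k. 2 * (c * z) * exp (c * z) * (c powr (-a)) ^ k) sums (2 * (c * z) * exp (c * z) * (1 / (1 - c powr (-a))))"
    by (intro sums_mult geometric_sums q)
  have "mittag_leffler1 a (z powr a) \<le> (\<Sum>k. 2 * (c * z) * exp (c * z) * (c powr (-a)) ^ k)"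
    unfolding mittag_leffler1_def
    by (intro suminf_le MLf_term_upper MLf_summable sums_summable[OF sg]) (use assms in auto)
  also have "\<dots> = 2 * (c * z) * exp (c * z) / (1 - c powr (-a))" using sg by (simp add: sums_iff)
  finally show ?thesis .
qed

lemma MLf_lower:
  fixes a z :: real
  assumes "a > 0" "a \<le> 1" "z \<ge> 2"
  shows "(z - 1) * ln z - (z + 2) * ln (z + 1) + z - 2 \<le> ln (mittag_leffler1 a (z powr a))"
proof -
  define k where "k = nat \<lfloor>z / a\<rfloor>"
  define x where "x = a * real k"
  have za: "z / a \<ge> 0" using assms by simp
  have k1: "real k \<le> z / a" "z / a < real k + 1" using za by (auto simp: k_def)
  have x1: "x \<le> z" using k1(1) assms by (simp add: x_def field_simps)
  have "z < a * (real k + 1)" using k1(2) assms by (simp add: field_simps)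
  hence x2: "z - 1 < x" using assms by (simp add: x_def algebra_simps)
  define n where "n = nat \<lfloor>x\<rfloor>"
  have x0: "x \<ge> 0" using x2 assms by simp
  have n1: "real n \<le> x" "x < real n + 1" using x0 by (auto simp: n_def)
  have gf: "Gamma (1 + real (Suc n)) = (fact (Suc n) :: real)" by (rule Gamma_fact)
  have "Gamma (x + 1) < Gamma (real (Suc n) + 1)"
    using n1 x2 assms by (intro Gamma_real_strict_mono) auto
  hence g: "Gamma (x + 1) \<le> fact (Suc n)" using gf by (simp add: add.commute)
  have gp: "Gamma (x + 1) > 0" using x0 by simp
  have lf: "ln (fact (Suc n) :: real) \<le> (real (Suc n) + 1) * ln (real (Suc n)) + 1 - real (Suc n)"
    by (rule ln_fact_upper) simp
  have "ln (Gamma (x + 1)) \<le> ln (fact (Suc n))" using g gp by simp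
  hence lg: "ln (Gamma (x + 1)) \<le> (real n + 2) * ln (real n + 1) - real n"
    using lf by (simp add: algebra_simps)
  have zp: "z > 0" using assms by simp
  have t: "z powr x / Gamma (x + 1) \<le> mittag_leffler1 a (z powr a)"
    using MLf_ge_term[of a "z powr a" k] assms zp
    by (simp add: x_def powr_powr powr_realpow[symmetric] mult.commute)
  have E1: "mittag_leffler1 a (z powr a) \<ge> 1" using MLf_ge_1[of a "z powr a"] assms by simp
  have "ln (z powr x / Gamma (x + 1)) \<le> ln (mittag_leffler1 a (z powr a))"
    using t zp gp E1 by (subst ln_le_cancel_iff) auto
  hence A: "x * ln z - ln (Gamma (x + 1)) \<le> ln (mittag_leffler1 a (z powr a))"
    using zp gp by (simp add: ln_div ln_powr)
  have lz: "ln z \<ge> 0" using assms by simp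
  have B: "(z - 1) * ln z \<le> x * ln z" using x2 lz by (intro mult_right_mono) auto
  have "(real n + 2) * ln (real n + 1) \<le> (z + 2) * ln (z + 1)"
    using n1 x1 by (intro mult_mono) auto
  moreover have "real n > z - 2" using n1 x2 by simp
  ultimately show ?thesis using A B lg by linarith
qed

lemma MLf_asymp:
  fixes a :: real
  assumes "a > 0" "a \<le> 1"
  shows "((\<lambda>z. ln (mittag_leffler1 a (z powr a)) / z) \<longlongrightarrow> 1) at_top"
proof (rule order_tendstoI)
  fix b :: real assume b: "b < 1"
  have "((\<lambda>z::real. ((z - 1) * ln z - (z + 2) * ln (z + 1) + z - 2) / z) \<longlongrightarrow> 1) at_top"
    by real_asymp
  hence ev: "eventually (\<lambda>z. b < ((z - 1) * ln z - (z + 2) * ln (z + 1) + z - 2) / z) at_top"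
    using b by (rule order_tendstoD)
  show "eventually (\<lambda>z. b < ln (mittag_leffler1 a (z powr a)) / z) at_top"
    using ev eventually_ge_at_top[of "2::real"]
  proof eventually_elim
    case (elim z)
    have "((z - 1) * ln z - (z + 2) * ln (z + 1) + z - 2) / z \<le> ln (mittag_leffler1 a (z powr a)) / z"
      using elim MLf_lower[OF assms, of z] by (intro divide_right_mono) auto
    thus ?case using elim by linarith
  qed
next
  fix b :: real assume b: "b > 1"
  define c where "c = (1 + b) / 2"
  have c1: "c > 1" "c < b" using b by (auto simp: c_def)
  define Q where "Q = 1 - c powr (-a)"
  have Q: "Q > 0" using c1 assms by (simp add: Q_def powr_minus inverse_less_1_iff)
  define K where "K = ln 2 + ln c - ln Q"
  have "((\<lambda>z::real. (K + ln z) / z + c) \<longlongrightarrow> 0 + c) at_top"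
    by (intro tendsto_add tendsto_const) real_asymp
  hence ev: "eventually (\<lambda>z. (K + ln z) / z + c < b) at_top"
    using c1 by (intro order_tendstoD) auto
  show "eventually (\<lambda>z. ln (mittag_leffler1 a (z powr a)) / z < b) at_top"
    using ev eventually_ge_at_top[of "1::real"]
  proof eventually_elim
    case (elim z)
    have z0: "z > 0" using elim by simp
    have E1: "mittag_leffler1 a (z powr a) \<ge> 1" using MLf_ge_1[of a "z powr a"] assms by simp
    have U: "mittag_leffler1 a (z powr a) \<le> 2 * (c * z) * exp (c * z) / Q"
      unfolding Q_def using MLf_upper[OF assms(1) _ c1(1), of z] elim by simp
    have "ln (mittag_leffler1 a (z powr a)) \<le> ln (2 * (c * z) * exp (c * z) / Q)"
      using U E1 by (subst ln_le_cancel_iff) auto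
    also have "\<dots> = K + ln z + c * z"
      using c1 z0 Q by (simp add: K_def ln_div ln_mult)
    finally have "ln (mittag_leffler1 a (z powr a)) / z \<le> (K + ln z + c * z) / z"
      using z0 by (intro divide_right_mono) auto
    also have "\<dots> = (K + ln z) / z + c" using z0 by (simp add: field_simps)
    finally show ?case using elim by linarith
  qed
qed

lemma MLf_log_rate:
  fixes a mu p :: real
  assumes "a > 0" "a \<le> 1" "mu > 0" "p > 0"
  shows "((\<lambda>t. ln (mittag_leffler1 a (mu * t powr p)) / t powr (p / a)) \<longlongrightarrow> mu powr (1 / a)) at_top"
proof -
  define z where "z t = mu powr (1 / a) * t powr (p / a)" for t :: real
  have mp: "mu powr (1 / a) > 0" using assms by simp
  have fz: "filterlim z at_top at_top" unfolding z_def
    by (rule filterlim_tendsto_pos_mult_at_top[OF tendsto_const mp real_powr_at_top]) (use assms in simp)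
  have "((\<lambda>t. ln (mittag_leffler1 a (z t powr a)) / z t) \<longlongrightarrow> 1) at_top"
    using filterlim_compose[OF MLf_asymp[OF assms(1,2)] fz] .
  hence l: "((\<lambda>t. ln (mittag_leffler1 a (z t powr a)) / z t * mu powr (1 / a)) \<longlongrightarrow> 1 * mu powr (1 / a)) at_top"
    by (intro tendsto_mult tendsto_const)
  have ev: "eventually (\<lambda>t. ln (mittag_leffler1 a (z t powr a)) / z t * mu powr (1 / a)
      = ln (mittag_leffler1 a (mu * t powr p)) / t powr (p / a)) at_top"
    using eventually_gt_at_top[of "0::real"]
  proof eventually_elim
    case (elim t)
    have "z t powr a = mu * t powr p" using elim assms
      by (simp add: z_def powr_mult powr_powr)
    moreover have "t powr (p / a) > 0" using elim by simp
    ultimately show ?case using mp by (simp add: z_def field_simps)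
  qed
  show ?thesis using Lim_transform_eventually[OF l ev] by simp
qed

theorem lemma4p1:
  fixes lam \<alpha>0 \<alpha>0' \<alpha> \<alpha>' u :: real
    and \<alpha>s \<alpha>s' :: "nat \<Rightarrow> real"
  assumes "lam > 0"
    and "\<alpha>0 \<in> {0<..1}" "\<alpha>0' \<in> {0<..1}" "\<alpha> \<in> {0<..1}" "\<alpha>' \<in> {0<..1}"
    and "\<alpha>' / \<alpha> - \<alpha>0' / \<alpha>0 > 0"
    and "\<alpha>s 0 = \<alpha>0" "\<alpha>s' 0 = \<alpha>0'"
    and "\<And>j. j \<ge> 1 \<Longrightarrow> \<alpha>s j = \<alpha>" "\<And>j. j \<ge> 1 \<Longrightarrow> \<alpha>s' j = \<alpha>'"
    and "u > 0"
  shows "((\<lambda>t. ln (\<Sum>k. (lam ^ k / Gamma (\<alpha>s k * real k + 1)) * (u * t powr \<alpha>s' k) ^ k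
                     / mittag_leffler1 (\<alpha>s k) (lam * t powr \<alpha>s' k)) / t powr (\<alpha>' / \<alpha>))
          \<longlongrightarrow> max ((lam * u) powr (1 / \<alpha>) - lam powr (1 / \<alpha>)) 0) at_top"
proof -
  note lam = assms(1)
  have a0: "\<alpha>0 > 0" "\<alpha>0 \<le> 1" "\<alpha>0' > 0" using assms(2,3) by auto
  have a1: "\<alpha> > 0" "\<alpha> \<le> 1" "\<alpha>' > 0" using assms(4,5) by auto
  define T where "T t = t powr (\<alpha>' / \<alpha>)" for t :: real
  define E0 where "E0 t = mittag_leffler1 \<alpha>0 (lam * t powr \<alpha>0')" for t
  define E1 where "E1 t = mittag_leffler1 \<alpha> (lam * t powr \<alpha>')" for t
  define Eu where "Eu t = mittag_leffler1 \<alpha> ((lam * u) * t powr \<alpha>')" for t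
  define L1 where "L1 = lam powr (1 / \<alpha>)"
  define Lu where "Lu = (lam * u) powr (1 / \<alpha>)"
  have lu: "lam * u > 0" using lam assms(11) by simp
  have Lu0: "Lu > 0" using lam assms(11) by (simp add: Lu_def)

  have sum_eq: "(\<Sum>k. (lam ^ k / Gamma (\<alpha>s k * real k + 1)) * (u * t powr \<alpha>s' k) ^ k
                     / mittag_leffler1 (\<alpha>s k) (lam * t powr \<alpha>s' k)) = 1 / E0 t + (Eu t - 1) / E1 t"
    if t: "t > 0" for t
  proof -
    define F where "F k = (lam ^ k / Gamma (\<alpha>s k * real k + 1)) * (u * t powr \<alpha>s' k) ^ k
                     / mittag_leffler1 (\<alpha>s k) (lam * t powr \<alpha>s' k)" for k
    define g where "g k = ((lam * u) * t powr \<alpha>') ^ k / Gamma (\<alpha> * real k + 1)" for k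
    have "summable g" unfolding g_def using a1 lu t by (intro MLf_summable) auto
    hence "g sums (suminf g)" by (rule summable_sums)
    moreover have "suminf g = Eu t" unfolding Eu_def mittag_leffler1_def g_def[abs_def] ..
    ultimately have gs: "g sums Eu t" by simp
    have g0: "g 0 = 1" by (simp add: g_def)
    have "(\<lambda>k. g (Suc k)) sums (Eu t - 1)" using gs g0 by (subst sums_Suc_iff) simp
    hence "(\<lambda>k. g (Suc k) / E1 t) sums ((Eu t - 1) / E1 t)" by (rule sums_divide)
    moreover have "F (Suc k) = g (Suc k) / E1 t" for k
      using assms(9,10)[of "Suc k"] by (simp add: F_def g_def E1_def power_mult_distrib)
    ultimately have "(\<lambda>k. F (Suc k)) sums ((Eu t - 1) / E1 t)" by simp
    hence "F sums ((Eu t - 1) / E1 t + F 0)" by (subst (asm) sums_Suc_iff)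
    moreover have "F 0 = 1 / E0 t" using assms(7,8) by (simp add: F_def E0_def)
    ultimately show ?thesis unfolding F_def[symmetric] by (simp add: sums_iff add.commute)
  qed

  have Tinf: "filterlim T at_top at_top" unfolding T_def using a1 by (intro real_powr_at_top) simp
  have lE1: "((\<lambda>t. ln (E1 t) / T t) \<longlongrightarrow> L1) at_top"
    unfolding E1_def T_def L1_def using a1 lam by (intro MLf_log_rate) auto
  have lEu: "((\<lambda>t. ln (Eu t) / T t) \<longlongrightarrow> Lu) at_top"
    unfolding Eu_def T_def Lu_def using a1 lu by (intro MLf_log_rate) auto
  have lE0a: "((\<lambda>t. ln (E0 t) / t powr (\<alpha>0' / \<alpha>0)) \<longlongrightarrow> lam powr (1 / \<alpha>0)) at_top"
    unfolding E0_def using a0 lam by (intro MLf_log_rate) auto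
  have pw: "((\<lambda>t. t powr (\<alpha>0' / \<alpha>0 - \<alpha>' / \<alpha>)) \<longlongrightarrow> 0) at_top"
    using assms(6) by (intro tendsto_neg_powr filterlim_ident) simp
  have "((\<lambda>t. ln (E0 t) / t powr (\<alpha>0' / \<alpha>0) * t powr (\<alpha>0' / \<alpha>0 - \<alpha>' / \<alpha>)) \<longlongrightarrow> lam powr (1 / \<alpha>0) * 0) at_top"
    by (intro tendsto_mult lE0a pw)
  moreover have "eventually (\<lambda>t. ln (E0 t) / t powr (\<alpha>0' / \<alpha>0) * t powr (\<alpha>0' / \<alpha>0 - \<alpha>' / \<alpha>) = ln (E0 t) / T t) at_top"
    using eventually_gt_at_top[of "0::real"]
    by eventually_elim (simp add: T_def powr_diff)
  ultimately have lE0: "((\<lambda>t. ln (E0 t) / T t) \<longlongrightarrow> 0) at_top"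
    using Lim_transform_eventually by fastforce
  have "filterlim (\<lambda>t. ln (Eu t) / T t * T t) at_top at_top"
    by (rule filterlim_tendsto_pos_mult_at_top[OF lEu Lu0 Tinf])
  moreover have "eventually (\<lambda>t. ln (Eu t) / T t * T t = ln (Eu t)) at_top"
    using eventually_gt_at_top[of "0::real"]
    by eventually_elim (simp add: T_def)
  ultimately have "filterlim (\<lambda>t. ln (Eu t)) at_top at_top"
    using filterlim_cong by fastforce
  hence evEu: "eventually (\<lambda>t. ln 2 \<le> ln (Eu t)) at_top"
    by (simp add: filterlim_at_top)
  have l2: "((\<lambda>t. ln 2 / T t) \<longlongrightarrow> 0) at_top"
    by (intro tendsto_divide_0[OF tendsto_const] filterlim_at_top_imp_at_infinity Tinf)
  have evb: "eventually (\<lambda>t. t > 0 \<and> Eu t \<ge> 2 \<and> T t > 0 \<and> E0 t \<ge> 1 \<and> E1 t \<ge> 1) at_top"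
    using eventually_gt_at_top[of "0::real"] evEu
  proof eventually_elim
    case (elim t)
    have "Eu t \<ge> 1" unfolding Eu_def using lu elim a1 by (intro MLf_ge_1) auto
    hence "Eu t \<ge> 2" using elim by (subst (asm) ln_le_cancel_iff) auto
    moreover have "E0 t \<ge> 1" unfolding E0_def using lam elim a0 by (intro MLf_ge_1) auto
    moreover have "E1 t \<ge> 1" unfolding E1_def using lam elim a1 by (intro MLf_ge_1) auto
    ultimately show ?case using elim by (simp add: T_def)
  qed
  have lEum: "((\<lambda>t. ln (Eu t - 1) / T t) \<longlongrightarrow> Lu) at_top"
  proof (rule tendsto_sandwich)
    show "eventually (\<lambda>t. ln (Eu t) / T t - ln 2 / T t \<le> ln (Eu t - 1) / T t) at_top"
      using evb
    proof eventually_elim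
      case (elim t)
      have "ln (Eu t / 2) \<le> ln (Eu t - 1)" using elim by (subst ln_le_cancel_iff) auto
      hence "ln (Eu t) - ln 2 \<le> ln (Eu t - 1)" using elim by (simp add: ln_div)
      hence "(ln (Eu t) - ln 2) / T t \<le> ln (Eu t - 1) / T t" using elim by (intro divide_right_mono) auto
      thus ?case by (simp add: diff_divide_distrib)
    qed
    show "eventually (\<lambda>t. ln (Eu t - 1) / T t \<le> ln (Eu t) / T t) at_top"
      using evb
    proof eventually_elim
      case (elim t)
      have "ln (Eu t - 1) \<le> ln (Eu t)" using elim by (subst ln_le_cancel_iff) auto
      thus ?case using elim by (intro divide_right_mono) auto
    qed
    show "((\<lambda>t. ln (Eu t) / T t - ln 2 / T t) \<longlongrightarrow> Lu) at_top"
      using tendsto_diff[OF lEu l2] by simp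
  qed (rule lEu)
  define A where "A t = 1 / E0 t" for t
  define B where "B t = (Eu t - 1) / E1 t" for t
  have lA: "((\<lambda>t. ln (A t) / T t) \<longlongrightarrow> 0) at_top"
  proof -
    have "((\<lambda>t. - (ln (E0 t) / T t)) \<longlongrightarrow> - 0) at_top" by (intro tendsto_minus lE0)
    moreover have "eventually (\<lambda>t. - (ln (E0 t) / T t) = ln (A t) / T t) at_top"
      using evb by eventually_elim (simp add: A_def ln_div)
    ultimately show ?thesis using Lim_transform_eventually by fastforce
  qed
  have lB: "((\<lambda>t. ln (B t) / T t) \<longlongrightarrow> Lu - L1) at_top"
  proof -
    have "((\<lambda>t. ln (Eu t - 1) / T t - ln (E1 t) / T t) \<longlongrightarrow> Lu - L1) at_top"
      by (intro tendsto_diff lEum lE1)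
    moreover have "eventually (\<lambda>t. ln (Eu t - 1) / T t - ln (E1 t) / T t = ln (B t) / T t) at_top"
      using evb
    proof eventually_elim
      case (elim t)
      have "ln (B t) = ln (Eu t - 1) - ln (E1 t)" unfolding B_def using elim by (intro ln_divide_pos) auto
      thus ?case by (simp add: diff_divide_distrib)
    qed
    ultimately show ?thesis using Lim_transform_eventually by fastforce
  qed
  have lM: "((\<lambda>t. max (ln (B t) / T t) (ln (A t) / T t)) \<longlongrightarrow> max (Lu - L1) 0) at_top"
    by (intro tendsto_max lA lB)
  have lS: "((\<lambda>t. ln (A t + B t) / T t) \<longlongrightarrow> max (Lu - L1) 0) at_top"
  proof (rule tendsto_sandwich[OF _ _ lM])
    show "eventually (\<lambda>t. max (ln (B t) / T t) (ln (A t) / T t) \<le> ln (A t + B t) / T t) at_top"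
      using evb
    proof eventually_elim
      case (elim t)
      have Ap: "A t > 0" using elim by (simp add: A_def)
      have Bp: "B t > 0" using elim by (simp add: B_def)
      have "ln (A t) \<le> ln (A t + B t)" using Ap Bp by (subst ln_le_cancel_iff) auto
      hence 1: "ln (A t) / T t \<le> ln (A t + B t) / T t" using elim by (intro divide_right_mono) auto
      have "ln (B t) \<le> ln (A t + B t)" using Ap Bp by (subst ln_le_cancel_iff) auto
      hence 2: "ln (B t) / T t \<le> ln (A t + B t) / T t" using elim by (intro divide_right_mono) auto
      show ?case using 1 2 by simp
    qed
    show "eventually (\<lambda>t. ln (A t + B t) / T t \<le> ln 2 / T t + max (ln (B t) / T t) (ln (A t) / T t)) at_top"
      using evb
    proof eventually_elim
      case (elim t)
      have Ap: "A t > 0" using elim by (simp add: A_def)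
      have Bp: "B t > 0" using elim by (simp add: B_def)
      show ?case
      proof (cases "A t \<le> B t")
        case True
        have "ln (A t + B t) \<le> ln (2 * B t)" using Ap Bp True by (subst ln_le_cancel_iff) auto
        hence "ln (A t + B t) \<le> ln 2 + ln (B t)" using Bp by (simp add: ln_mult)
        hence "ln (A t + B t) / T t \<le> (ln 2 + ln (B t)) / T t" using elim by (intro divide_right_mono) auto
        thus ?thesis by (simp add: add_divide_distrib)
      next
        case False
        have "ln (A t + B t) \<le> ln (2 * A t)" using Ap Bp False by (subst ln_le_cancel_iff) auto
        hence "ln (A t + B t) \<le> ln 2 + ln (A t)" using Ap by (simp add: ln_mult)
        hence "ln (A t + B t) / T t \<le> (ln 2 + ln (A t)) / T t" using elim by (intro divide_right_mono) auto
        thus ?thesis by (simp add: add_divide_distrib)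
      qed
    qed
    show "((\<lambda>t. ln 2 / T t + max (ln (B t) / T t) (ln (A t) / T t)) \<longlongrightarrow> max (Lu - L1) 0) at_top"
      using tendsto_add[OF l2 lM] by simp
  qed
  have ev: "eventually (\<lambda>t. ln (A t + B t) / T t =
      ln (\<Sum>k. (lam ^ k / Gamma (\<alpha>s k * real k + 1)) * (u * t powr \<alpha>s' k) ^ k
                     / mittag_leffler1 (\<alpha>s k) (lam * t powr \<alpha>s' k)) / t powr (\<alpha>' / \<alpha>)) at_top"
    using evb
  proof eventually_elim
    case (elim t)
    show ?case using sum_eq[of t] elim unfolding A_def B_def T_def by (simp only:)
  qed
  show ?thesis using Lim_transform_eventually[OF lS ev] by (simp add: Lu_def L1_def)
qed

end
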